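(* Let $M$ be a complex $N\times N$ matrix ($N\ge 1$) whose eigenvalues $\lambda_1,\dots,\lambda_N$ are pairwise distinct, let $C(z)=\det(zI-M)=\prod_{k=1}^N(z-\lambda_k)$, and define the response function $$F(t)=\sum_{k=1}^{N}\frac{\exp(i\lambda_k t)}{C'(\lambda_k)},\qquad C'(\lambda_k)=\prod_{m\neq k}(\lambda_k-\lambda_m),$$ and the elementary symmetric polynomials $S_m[\lambda]=\sum_{1\le k_1<\cdots<k_m\le N}\lambda_{k_1}\cdots\lambda_{k_m}$ (with $S_0=1$). Then for all $t\in\mathbb{C}$, $$\exp(itM)=\sum_{n=0}^{N-1}M^n E_n(t),\qquad E_n(t)=\sum_{m=0}^{N-1-n}(-1)^m S_m[\lambda]\left(-i\frac{d}{dt}\right)^{N-1-n-m}F(t).$$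
   Context: $I$ denotes the $N\times N$ identity matrix and $\exp$ the matrix exponential. The symmetric polynomials $S_m[\lambda]$ can equivalently be computed from traces of powers of $M$ via $\det(I+tM)=\sum_{m=0}^N t^m S_m$. *)

theory Defs
  imports "HOL-Analysis.Analysis"
begin

definition cmat_scale :: "complex \<Rightarrow> complex^'n^'n \<Rightarrow> complex^'n^'n" where
  "cmat_scale c A = (\<chi> i j. c * A $ i $ j)"

primrec matpow :: "complex^'n^'n \<Rightarrow> nat \<Rightarrow> complex^'n^'n" where
  "matpow A 0 = mat 1"
| "matpow A (Suc k) = A ** matpow A k"

definition mat_exp :: "complex^'n^'n \<Rightarrow> complex^'n^'n" where
  "mat_exp A = (\<Sum>k. cmat_scale (1 / fact k) (matpow A k))"

definition elem_sym :: "('n::finite \<Rightarrow> complex) \<Rightarrow> nat \<Rightarrow> complex" where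
  "elem_sym lam m = (\<Sum>K\<in>{K. card K = m}. \<Prod>k\<in>K. lam k)"

definition response :: "('n::finite \<Rightarrow> complex) \<Rightarrow> complex \<Rightarrow> complex" where
  "response lam t = (\<Sum>k\<in>UNIV. exp (\<i> * lam k * t) / (\<Prod>m\<in>UNIV - {k}. (lam k - lam m)))"

definition E_coeff :: "('n::finite \<Rightarrow> complex) \<Rightarrow> nat \<Rightarrow> complex \<Rightarrow> complex" where
  "E_coeff lam n t = (\<Sum>m = 0..CARD('n) - 1 - n.
      (-1) ^ m * elem_sym lam m * (- \<i>) ^ (CARD('n) - 1 - n - m)
        * (deriv ^^ (CARD('n) - 1 - n - m)) (response lam) t)"

end

theory Submission
  imports Defs
begin


definition charp :: "('n::finite \<Rightarrow> complex) \<Rightarrow> complex \<Rightarrow> complex" where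
  "charp lam z = (\<Prod>k\<in>UNIV. z - lam k)"
definition acoef :: "('n::finite \<Rightarrow> complex) \<Rightarrow> nat \<Rightarrow> complex" where
  "acoef lam m = (-1)^m * elem_sym lam m"
definition Lp :: "('n::finite \<Rightarrow> complex) \<Rightarrow> complex \<Rightarrow> complex \<Rightarrow> complex" where
  "Lp lam z w = (\<Sum>n=0..CARD('n)-1. z^n * (\<Sum>m=0..CARD('n)-1-n. acoef lam m * w^(CARD('n)-1-n-m)))"

lemma vieta: "charp (lam::'n::finite \<Rightarrow> complex) z = (\<Sum>m=0..CARD('n). acoef lam m * z^(CARD('n) - m))"
proof -
  have "charp lam z = (\<Prod>k\<in>UNIV. (- lam k) + z)" by (simp add: charp_def)
  also have "\<dots> = (\<Sum>X\<in>Pow UNIV. (\<Prod>k\<in>X. - lam k) * (\<Prod>k\<in>UNIV-X. z))"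
    by (rule prod_add) simp
  also have "\<dots> = (\<Sum>X\<in>Pow UNIV. (-1)^card X * (\<Prod>k\<in>X. lam k) * z^(CARD('n) - card X))"
  proof (rule sum.cong[OF refl])
    fix X :: "'n set" assume "X \<in> Pow UNIV"
    have "(\<Prod>k\<in>X. - lam k) = (\<Prod>k\<in>X. (-1) * lam k)" by simp
    also have "\<dots> = (-1)^card X * (\<Prod>k\<in>X. lam k)" by (simp only: prod.distrib prod_constant)
    finally show "(\<Prod>k\<in>X. - lam k) * (\<Prod>k\<in>UNIV-X. z) = (-1)^card X * (\<Prod>k\<in>X. lam k) * z^(CARD('n) - card X)"
      by (simp add: card_Diff_subset)
  qed
  also have "\<dots> = (\<Sum>m=0..CARD('n). \<Sum>X\<in>{X\<in>Pow UNIV. card X = m}. (-1)^card X * (\<Prod>k\<in>X. lam k) * z^(CARD('n) - card X))"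
    by (rule sum.group[symmetric]) (auto simp: card_mono)
  also have "\<dots> = (\<Sum>m=0..CARD('n). acoef lam m * z^(CARD('n) - m))"
    by (rule sum.cong[OF refl]) (simp add: acoef_def elem_sym_def sum_distrib_left sum_distrib_right mult.assoc)
  finally show ?thesis .
qed


lemma Lp_mult: "(z - w) * Lp (lam::'n::finite \<Rightarrow> complex) z w = charp lam z - charp lam w"
proof -
  define K where "K = CARD('n) - 1"
  have NK: "CARD('n) = Suc K" unfolding K_def by simp
  have "Lp lam z w = (\<Sum>n\<in>{0..K}. \<Sum>m\<in>{m\<in>{0..K}. n + m \<le> K}. z^n * (acoef lam m * w^(K-n-m)))"
    unfolding Lp_def K_def[symmetric]
    by (rule sum.cong[OF refl]) (auto simp: sum_distrib_left intro!: sum.cong)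
  also have "\<dots> = (\<Sum>m\<in>{0..K}. \<Sum>n\<in>{n\<in>{0..K}. n + m \<le> K}. z^n * (acoef lam m * w^(K-n-m)))"
    by (rule sum.swap_restrict) auto
  also have "\<dots> = (\<Sum>m\<in>{0..K}. acoef lam m * (\<Sum>n<Suc K - m. w^(Suc K - m - Suc n) * z^n))"
  proof (rule sum.cong[OF refl])
    fix m assume m: "m \<in> {0..K}"
    have e: "{n\<in>{0..K}. n + m \<le> K} = {..<Suc K - m}" using m by auto
    show "(\<Sum>n\<in>{n\<in>{0..K}. n + m \<le> K}. z^n * (acoef lam m * w^(K-n-m))) = acoef lam m * (\<Sum>n<Suc K - m. w^(Suc K - m - Suc n) * z^n)"
      unfolding e sum_distrib_left
      by (rule sum.cong[OF refl]) (simp add: algebra_simps)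
  qed
  finally have L: "Lp lam z w = \<dots>" .
  have "(z - w) * Lp lam z w = (\<Sum>m\<in>{0..K}. acoef lam m * (z^(Suc K - m) - w^(Suc K - m)))"
    unfolding L sum_distrib_left power_diff_sumr2 by (simp add: algebra_simps)
  also have "\<dots> = (\<Sum>m\<in>{0..Suc K}. acoef lam m * (z^(Suc K - m) - w^(Suc K - m)))"
    by simp
  also have "\<dots> = charp lam z - charp lam w"
    unfolding vieta NK by (simp add: sum_subtractf algebra_simps)
  finally show ?thesis .
qed


lemma cont_eq:
  fixes f g :: "complex \<Rightarrow> complex"
  assumes "isCont f a" "isCont g a" "\<And>z. z \<noteq> a \<Longrightarrow> f z = g z"
  shows "f a = g a"
proof -
  have 1: "(f \<longlongrightarrow> f a) (at a)" using assms(1) isCont_def by blast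
  have 2: "(g \<longlongrightarrow> g a) (at a)" using assms(2) isCont_def by blast
  have "eventually (\<lambda>z. g z = f z) (at a)"
    by (simp add: eventually_at_filter assms(3))
  with 2 have "(f \<longlongrightarrow> g a) (at a)" using tendsto_cong by blast
  with 1 show ?thesis by (rule tendsto_unique[OF at_neq_bot])
qed

lemma charp_root: "charp (lam::'n::finite \<Rightarrow> complex) (lam k) = 0"
  unfolding charp_def by (rule prod_zero[of UNIV]) auto

lemma Lp_eval:
  fixes lam :: "'n::finite \<Rightarrow> complex"
  assumes inj: "inj lam"
  shows "Lp lam (lam k) (lam j) = (if j = k then (\<Prod>m\<in>UNIV-{k}. lam k - lam m) else 0)"
proof (cases "j = k")
  case False
  then have ne: "lam k - lam j \<noteq> 0" using inj by (auto dest: injD)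
  have "(lam k - lam j) * Lp lam (lam k) (lam j) = 0"
    by (simp add: Lp_mult charp_root)
  with ne False show ?thesis by simp
next
  case True
  have "Lp lam (lam k) (lam k) = (\<Prod>m\<in>UNIV-{k}. lam k - lam m)"
  proof (rule cont_eq[where f = "\<lambda>z. Lp lam z (lam k)" and g = "\<lambda>z. \<Prod>m\<in>UNIV-{k}. z - lam m"])
    show "isCont (\<lambda>z. Lp lam z (lam k)) (lam k)" unfolding Lp_def by (intro continuous_intros)
    show "isCont (\<lambda>z. \<Prod>m\<in>UNIV-{k}. z - lam m) (lam k)" by (intro continuous_intros)
    fix z assume z: "z \<noteq> lam k"
    have "(z - lam k) * Lp lam z (lam k) = charp lam z"
      by (simp add: Lp_mult charp_root)
    also have "\<dots> = (z - lam k) * (\<Prod>m\<in>UNIV-{k}. z - lam m)"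
      unfolding charp_def by (simp add: prod.remove)
    finally show "Lp lam z (lam k) = (\<Prod>m\<in>UNIV-{k}. z - lam m)" using z by simp
  qed
  with True show ?thesis by simp
qed


definition Dk :: "('n::finite \<Rightarrow> complex) \<Rightarrow> 'n \<Rightarrow> complex" where
  "Dk lam k = (\<Prod>m\<in>UNIV-{k}. lam k - lam m)"

lemma deriv_resp:
  "(deriv ^^ j) (response (lam::'n::finite \<Rightarrow> complex))
     = (\<lambda>t. \<Sum>k\<in>UNIV. (\<i> * lam k)^j * exp (\<i> * lam k * t) / Dk lam k)"
proof (induction j)
  case 0
  show ?case by (simp add: response_def Dk_def fun_eq_iff)
next
  case (Suc j)
  show ?case
  proof (rule ext)
    fix t
    have "((\<lambda>t. \<Sum>k\<in>UNIV. (\<i> * lam k)^j * exp (\<i> * lam k * t) / Dk lam k) has_field_derivative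
          (\<Sum>k\<in>UNIV. (\<i> * lam k)^Suc j * exp (\<i> * lam k * t) / Dk lam k)) (at t)"
    proof (rule DERIV_sum)
      fix k :: 'n
      show "((\<lambda>t. (\<i> * lam k)^j * exp (\<i> * lam k * t) / Dk lam k) has_field_derivative
          (\<i> * lam k)^Suc j * exp (\<i> * lam k * t) / Dk lam k) (at t)"
        by (rule DERIV_cdivide) (auto intro!: derivative_eq_intros simp: algebra_simps)
    qed
    then show "(deriv ^^ Suc j) (response lam) t = (\<Sum>k\<in>UNIV. (\<i> * lam k)^Suc j * exp (\<i> * lam k * t) / Dk lam k)"
      using Suc by (simp add: DERIV_imp_deriv)
  qed
qed

lemma E_formula:
  "E_coeff (lam::'n::finite \<Rightarrow> complex) n t = (\<Sum>m=0..CARD('n)-1-n. acoef lam m *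
      (\<Sum>k\<in>UNIV. lam k^(CARD('n)-1-n-m) * exp (\<i> * lam k * t) / Dk lam k))"
proof -
  have p: "(- \<i>)^p * (\<i> * x)^p = x^p" for p and x :: complex
    by (simp add: power_mult_distrib[symmetric])
  show ?thesis unfolding E_coeff_def deriv_resp acoef_def
    by (rule sum.cong[OF refl]) (simp add: sum_distrib_left mult.assoc p flip: mult.assoc[of "(- \<i>)^_"])
qed

lemma E_eval:
  fixes lam :: "'n::finite \<Rightarrow> complex"
  assumes inj: "inj lam"
  shows "(\<Sum>n=0..CARD('n)-1. E_coeff lam n t * lam k ^ n) = exp (\<i> * lam k * t)"
proof -
  define e where "e j = exp (\<i> * lam j * t) / Dk lam j" for j
  have "(\<Sum>n=0..CARD('n)-1. E_coeff lam n t * lam k ^ n)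
     = (\<Sum>n=0..CARD('n)-1. \<Sum>m=0..CARD('n)-1-n. \<Sum>j\<in>UNIV. e j * (lam k^n * (acoef lam m * lam j^(CARD('n)-1-n-m))))"
    unfolding E_formula e_def sum_distrib_left sum_distrib_right
    by (intro sum.cong refl) (simp add: algebra_simps)
  also have "\<dots> = (\<Sum>n=0..CARD('n)-1. \<Sum>j\<in>UNIV. \<Sum>m=0..CARD('n)-1-n. e j * (lam k^n * (acoef lam m * lam j^(CARD('n)-1-n-m))))"
    by (intro sum.cong refl sum.swap)
  also have "\<dots> = (\<Sum>j\<in>UNIV. \<Sum>n=0..CARD('n)-1. \<Sum>m=0..CARD('n)-1-n. e j * (lam k^n * (acoef lam m * lam j^(CARD('n)-1-n-m))))"
    by (rule sum.swap)
  also have "\<dots> = (\<Sum>j\<in>UNIV. e j * Lp lam (lam k) (lam j))"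
    unfolding Lp_def sum_distrib_left by simp
  also have "\<dots> = e k * Dk lam k"
    by (simp add: Lp_eval[OF inj] Dk_def if_distrib cong: if_cong)
  also have "\<dots> = exp (\<i> * lam k * t)"
  proof -
    have "Dk lam k \<noteq> 0" unfolding Dk_def using inj by (auto dest: injD)
    then show ?thesis by (simp add: e_def)
  qed
  finally show ?thesis .
qed



lemma mv_cmat: "cmat_scale c A *v v = c *s (A *v v)"
  by (simp add: vec_eq_iff cmat_scale_def matrix_vector_mult_def sum_distrib_left mult.assoc)

lemma mv_scale: "(A::complex^'n^'m) *v (c *s v) = c *s (A *v v)"
  by (simp add: vec_eq_iff matrix_vector_mult_def sum_distrib_left mult_ac)

lemma matpow_eig:
  assumes "M *v v = \<mu> *s v"
  shows "matpow M k *v v = \<mu>^k *s v"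
proof (induction k)
  case 0 then show ?case by simp
next
  case (Suc k)
  have "matpow M (Suc k) *v v = M *v (matpow M k *v v)"
    by (simp add: matrix_vector_mul_assoc)
  also have "\<dots> = \<mu>^Suc k *s v" using Suc assms by (simp add: mv_scale)
  finally show ?case .
qed

lemma sum_mv: "finite S \<Longrightarrow> (\<Sum>n\<in>S. (A n::complex^'n^'m)) *v v = (\<Sum>n\<in>S. A n *v v)"
  by (induction S rule: finite_induct) (simp_all add: matrix_vector_mult_add_rdistrib)

lemma poly_eig:
  assumes "M *v v = \<mu> *s v" "finite S"
  shows "(\<Sum>n\<in>S. cmat_scale (c n) (matpow M n)) *v v = (\<Sum>n\<in>S. c n * \<mu>^n) *s v"
  using assms by (simp add: sum_mv mv_cmat matpow_eig[OF assms(1)] vec_eq_iff sum_distrib_right mult.assoc)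

lemma mv_lin: "(A::complex^'n^'m) *v (\<Sum>k\<in>S. c k *s w k) = (\<Sum>k\<in>S. c k *s (A *v w k))"
  by (simp add: vec_eq_iff matrix_vector_mult_def sum_distrib_left sum_component mult_ac sum.swap[of _ S])


lemma matpow_bound:
  fixes A :: "complex^'n^'n"
  defines "B \<equiv> (\<Sum>i\<in>UNIV. \<Sum>j\<in>UNIV. norm (A$i$j))"
  shows "norm (matpow A k $ i $ j) \<le> B^k"
proof (induction k arbitrary: i j)
  case 0 then show ?case by (simp add: mat_def)
next
  case (Suc k)
  have B0: "B \<ge> 0" unfolding B_def by (intro sum_nonneg) auto
  have row: "(\<Sum>l\<in>UNIV. norm (A$i$l)) \<le> B"
    unfolding B_def by (rule member_le_sum[where f = "\<lambda>i. \<Sum>l\<in>UNIV. norm (A$i$l)"]) (auto intro: sum_nonneg)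
  have "norm (matpow A (Suc k) $ i $ j) = norm (\<Sum>l\<in>UNIV. A$i$l * matpow A k $ l $ j)"
    by (simp add: matrix_matrix_mult_def)
  also have "\<dots> \<le> (\<Sum>l\<in>UNIV. norm (A$i$l) * B^k)"
    by (rule order_trans[OF norm_sum sum_mono]) (simp add: norm_mult Suc mult_left_mono)
  also have "\<dots> = (\<Sum>l\<in>UNIV. norm (A$i$l)) * B^k" by (simp add: sum_distrib_right)
  also have "\<dots> \<le> B * B^k" using row B0 by (simp add: mult_right_mono)
  finally show ?case by simp
qed

lemma mat_exp_sums:
  fixes A :: "complex^'n^'n"
  shows "(\<lambda>k. cmat_scale (1 / fact k) (matpow A k)) sums
          (\<chi> i j. \<Sum>k. (1 / fact k) * matpow A k $ i $ j)"
proof -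
  define B where "B = (\<Sum>i\<in>UNIV. \<Sum>j\<in>UNIV. norm (A$i$j))"
  have summ: "summable (\<lambda>k. (1 / fact k) * matpow A k $ i $ j)" for i j
  proof (rule summable_comparison_test'[where N = 0])
    show "summable (\<lambda>k. inverse (fact k) * B^k)" by (rule summable_exp)
    fix k :: nat
    show "norm ((1 / fact k) * matpow A k $ i $ j) \<le> inverse (fact k) * B^k"
    proof -
      have nf: "cmod (inverse (fact k :: complex)) = inverse (fact k)"
        by (simp add: norm_inverse)
      show ?thesis
        using matpow_bound[of A k i j] unfolding B_def[symmetric]
        by (simp add: norm_mult divide_inverse nf mult_left_mono)
    qed
  qed
  show ?thesis unfolding sums_def
  proof (rule vec_tendstoI)
    fix i
    show "((\<lambda>n. (\<Sum>k<n. cmat_scale (1 / fact k) (matpow A k)) $ i) \<longlongrightarrow>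
        (\<chi> i j. \<Sum>k. (1 / fact k) * matpow A k $ i $ j) $ i) sequentially"
    proof (rule vec_tendstoI)
      fix j
      have "(\<lambda>k. (1 / fact k) * matpow A k $ i $ j) sums (\<Sum>k. (1 / fact k) * matpow A k $ i $ j)"
        using summ by (rule summable_sums)
      then show "((\<lambda>n. (\<Sum>k<n. cmat_scale (1 / fact k) (matpow A k)) $ i $ j) \<longlongrightarrow>
        (\<chi> i j. \<Sum>k. (1 / fact k) * matpow A k $ i $ j) $ i $ j) sequentially"
        by (simp add: sums_def cmat_scale_def)
    qed
  qed
qed

lemma mat_exp_eig:
  fixes A :: "complex^'n^'n"
  assumes eig: "A *v v = \<mu> *s v"
  shows "mat_exp A *v v = exp \<mu> *s v"
proof -
  define B where "B = (\<Sum>i\<in>UNIV. \<Sum>j\<in>UNIV. norm (A$i$j))"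
  have summ: "summable (\<lambda>k. (1 / fact k) * matpow A k $ i $ j)" for i j
  proof -
    have "(\<lambda>k. cmat_scale (1 / fact k) (matpow A k) $ i $ j) sums
          ((\<chi> i j. \<Sum>k. (1 / fact k) * matpow A k $ i $ j) $ i $ j)"
      by (intro sums_vec_nth mat_exp_sums)
    then show ?thesis unfolding cmat_scale_def by (simp add: sums_summable)
  qed
  have ME: "mat_exp A = (\<chi> i j. \<Sum>k. (1 / fact k) * matpow A k $ i $ j)"
    unfolding mat_exp_def using mat_exp_sums[of A] by (rule sums_unique[symmetric])
  have expS: "(\<lambda>k. (1 / fact k) * \<mu>^k) sums exp \<mu>"
    using exp_converges[of \<mu>] by (simp add: scaleR_conv_of_real divide_inverse mult_ac)
  show ?thesis
  proof (subst vec_eq_iff, intro allI)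
    fix i
    have "(mat_exp A *v v) $ i = (\<Sum>j\<in>UNIV. (\<Sum>k. (1 / fact k) * matpow A k $ i $ j) * v $ j)"
      by (simp add: ME matrix_vector_mult_def)
    also have "\<dots> = (\<Sum>j\<in>UNIV. \<Sum>k. (1 / fact k) * matpow A k $ i $ j * v $ j)"
      using summ by (simp add: suminf_mult2)
    also have "\<dots> = (\<Sum>k. \<Sum>j\<in>UNIV. (1 / fact k) * matpow A k $ i $ j * v $ j)"
      by (rule suminf_sum[symmetric]) (intro summable_mult2 summ)
    also have "\<dots> = (\<Sum>k. (1 / fact k) * \<mu>^k * v $ i)"
    proof (rule suminf_cong)
      fix k
      have "(matpow A k *v v) $ i = \<mu>^k * v $ i" using matpow_eig[OF eig, of k] by simp
      then show "(\<Sum>j\<in>UNIV. (1 / fact k) * matpow A k $ i $ j * v $ j) = (1 / fact k) * \<mu>^k * v $ i"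
        by (simp add: matrix_vector_mult_def sum_distrib_left mult.assoc flip: sum_divide_distrib)
    qed
    also have "\<dots> = exp \<mu> * v $ i"
    proof -
      have "(\<Sum>k. (1 / fact k) * \<mu>^k * v $ i) = (\<Sum>k. (1 / fact k) * \<mu>^k) * v $ i"
        by (rule suminf_mult2[symmetric]) (rule sums_summable[OF expS])
      also have "(\<Sum>k. (1 / fact k) * \<mu>^k) = exp \<mu>" using expS by (rule sums_unique[symmetric])
      finally show ?thesis .
    qed
    finally show "(mat_exp A *v v) $ i = (exp \<mu> *s v) $ i" by simp
  qed
qed


theorem mainTheorem1:
  fixes M :: "complex^'n^'n" and lam :: "'n::finite \<Rightarrow> complex" and t :: complex
  assumes distinct: "inj lam"
    and eigen: "\<And>k. \<exists>v. v \<noteq> 0 \<and> M *v v = lam k *s v"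
  shows "mat_exp (cmat_scale (\<i> * t) M)
         = (\<Sum>n = 0..CARD('n) - 1. cmat_scale (E_coeff lam n t) (matpow M n))"
proof -
  obtain v where v0: "\<And>k. v k \<noteq> 0" and v: "\<And>k. M *v v k = lam k *s v k"
    using eigen by metis
  have Dnz: "Dk lam k \<noteq> 0" for k unfolding Dk_def using distinct by (auto dest: injD)
  have injv: "inj v"
  proof (rule injI)
    fix j k assume jk: "v j = v k"
    from v0[of j] obtain i where i: "v j $ i \<noteq> 0" by (auto simp: vec_eq_iff)
    have "lam j *s v j = lam k *s v j" using v[of j] v[of k] jk by metis
    then have "lam j * v j $ i = lam k * v j $ i" by (metis vector_smult_component)
    with i have "lam j = lam k" by simp
    with distinct show "j = k" by (auto dest: injD)
  qed
  define P where "P j = (\<Sum>n=0..CARD('n)-1. cmat_scale (\<Sum>m=0..CARD('n)-1-n. acoef lam m * lam j^(CARD('n)-1-n-m)) (matpow M n))" for j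
  have Pv0: "P j *v v k = (if j = k then Dk lam k else 0) *s v k" for j k
  proof -
    have "P j *v v k = Lp lam (lam k) (lam j) *s v k"
      unfolding P_def poly_eig[OF v finite_atLeastAtMost] Lp_def by (simp add: mult.commute)
    then show ?thesis by (simp add: Lp_eval[OF distinct] Dk_def)
  qed
  have Pv: "f *s (P j *v v k) = (if j = k then (f * Dk lam j) *s v j else 0)" for f j k
    by (simp add: Pv0 vector_smult_assoc)
  have indep: "vec.independent (range v)"
  proof (rule vec.independent_if_scalars_zero)
    show "finite (range v)" by simp
    fix f x assume sum0: "(\<Sum>x\<in>range v. f x *s x) = 0" and x: "x \<in> range v"
    then obtain j where xj: "x = v j" by auto
    have "(\<Sum>k\<in>UNIV. f (v k) *s v k) = 0" using sum0 by (simp add: sum.reindex[OF injv])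
    then have "P j *v (\<Sum>k\<in>UNIV. f (v k) *s v k) = 0" by simp
    then have "(\<Sum>k\<in>UNIV. f (v k) *s (P j *v v k)) = 0" by (simp add: mv_lin)
    then have "(f (v j) * Dk lam j) *s v j = 0"
      by (simp add: Pv)
    then have "f (v j) * Dk lam j = 0"
      using v0[of j] by (metis vec.scale_eq_0_iff)
    with Dnz show "f x = 0" by (simp add: xj)
  qed
  have span: "UNIV \<subseteq> vec.span (range v)"
    by (rule vec.card_ge_dim_independent[OF _ indep]) (simp_all add: vec_dim_card card_cart_basis card_image[OF injv])
  have L: "mat_exp (cmat_scale (\<i> * t) M) *v v k = exp (\<i> * lam k * t) *s v k" for k
  proof -
    have "cmat_scale (\<i> * t) M *v v k = (\<i> * lam k * t) *s v k"
      by (simp add: mv_cmat v vector_smult_assoc mult_ac)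
    then show ?thesis by (rule mat_exp_eig)
  qed
  have R: "(\<Sum>n = 0..CARD('n) - 1. cmat_scale (E_coeff lam n t) (matpow M n)) *v v k = exp (\<i> * lam k * t) *s v k" for k
    using E_eval[OF distinct, of t k] by (simp add: poly_eig[OF v finite_atLeastAtMost])
  show ?thesis
  proof (subst matrix_eq, intro allI)
    fix x :: "complex^'n"
    have "x \<in> vec.span (range v)" using span by auto
    then obtain u where "x = (\<Sum>w\<in>range v. u w *s w)" by (auto simp: vec.span_finite)
    then have x: "x = (\<Sum>k\<in>UNIV. u (v k) *s v k)" by (simp add: sum.reindex[OF injv])
    show "mat_exp (cmat_scale (\<i> * t) M) *v x = (\<Sum>n = 0..CARD('n) - 1. cmat_scale (E_coeff lam n t) (matpow M n)) *v x"
      unfolding x mv_lin L R ..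
  qed
qed

end
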